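(* Let $n\ge 1$, $k\ge 0$, and let $0=a_0<a_1<\dots<a_k$ be real numbers. For $j=0,\dots,k$ and $r>0$ let $f_{j,r}:\mathbb{R}^n\to\mathbb{R}$ be radial, essentially non-zero functions satisfying: (1) $f_{j,r}\in L_1(\mathbb{R}^n)\cap L_2(\mathbb{R}^n)$; (2) the Fourier transform of $r^{-n}f_{j,r}$, i.e. $\lambda\mapsto r^{-n}\int_{\mathbb{R}^n}e^{i\langle\lambda,x\rangle}f_{j,r}(x)\,dx$, equals $g_j(r(|\lambda|-a_j))$ for a function $g_j:\mathbb{R}\to\mathbb{R}$ (not depending on $r$); (3) $g_j$ is even and there exist $s_0\ge 0$ and $C>0$ such that $g_j^2(s)\le C s^{-n}$ for all $s\ge s_0$. Suppose a function $f_r:\mathbb{R}^n\to\mathbb{R}$ is given by $f_r(x)=\sum_{j=0}^k C_j f_{j,r}(x)$ for all $x\in\mathbb{R}^n$ and all $r>0$, with constants $C_0,\dots,C_k$ not depending on $r$. Then this representation is unique, i.e. the constants $C_0,\dots,C_k$ are uniquely determined by the family $(f_r)_{r>0}$.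
   Context: A function $f:\mathbb{R}^n\to\mathbb{R}$ is radial if $f(x)=\tilde f(|x|)$ for some function $\tilde f$; it is essentially non-zero if it is non-zero on a set of positive Lebesgue measure. *)

theory Defs
  imports "HOL-Analysis.Analysis"
begin

definition radial :: "('a::real_normed_vector \<Rightarrow> real) \<Rightarrow> bool" where
  "radial f \<longleftrightarrow> (\<exists>h. \<forall>x. f x = h (norm x))"

definition ess_nonzero :: "('a::euclidean_space \<Rightarrow> real) \<Rightarrow> bool" where
  "ess_nonzero f \<longleftrightarrow> emeasure lebesgue {x. f x \<noteq> 0} > 0"

end

theory Submission
  imports Defs "HOL-Real_Asymp.Real_Asymp"
begin


definition trigp :: "('a::euclidean_space \<times> complex) list \<Rightarrow> 'a \<Rightarrow> complex" where
  "trigp xs x = (\<Sum>(l,c)\<leftarrow>xs. c * cis (l \<bullet> x))"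

lemma trigp_Nil[simp]: "trigp [] x = 0" by (simp add: trigp_def)
lemma trigp_Cons[simp]: "trigp ((l,c)#xs) x = c * cis (l \<bullet> x) + trigp xs x"
  by (simp add: trigp_def)
lemma trigp_append[simp]: "trigp (xs @ ys) x = trigp xs x + trigp ys x"
  by (simp add: trigp_def)

lemma trigp_map_mult:
  "trigp (map (\<lambda>(l2,c2). (l1+l2, c1*c2)) ys) x = c1 * cis (l1 \<bullet> x) * trigp ys x"
  by (induction ys) (auto simp: inner_add_left cis_mult[symmetric] algebra_simps)

lemma trigp_mult:
  "trigp xs x * trigp ys x = trigp (concat (map (\<lambda>(l1,c1). map (\<lambda>(l2,c2). (l1+l2, c1*c2)) ys) xs)) x"
  by (induction xs) (auto simp: trigp_map_mult algebra_simps)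

definition trig :: "('a::euclidean_space \<Rightarrow> real) \<Rightarrow> bool" where
  "trig h \<longleftrightarrow> (\<exists>xs. \<forall>x. complex_of_real (h x) = trigp xs x)"

lemma trig_const: "trig (\<lambda>x. c)"
  unfolding trig_def by (rule exI[of _ "[(0, complex_of_real c)]"]) simp

lemma trig_add: "trig f \<Longrightarrow> trig g \<Longrightarrow> trig (\<lambda>x. f x + g x)"
  unfolding trig_def
proof (elim exE)
  fix xs ys assume "\<forall>x. complex_of_real (f x) = trigp xs x" "\<forall>x. complex_of_real (g x) = trigp ys x"
  then show "\<exists>zs. \<forall>x. complex_of_real (f x + g x) = trigp zs x"
    by (intro exI[of _ "xs @ ys"]) simp
qed

lemma trig_mult: "trig f \<Longrightarrow> trig g \<Longrightarrow> trig (\<lambda>x. f x * g x)"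
  unfolding trig_def
proof (elim exE)
  fix xs ys assume "\<forall>x. complex_of_real (f x) = trigp xs x" "\<forall>x. complex_of_real (g x) = trigp ys x"
  then show "\<exists>zs. \<forall>x. complex_of_real (f x * g x) = trigp zs x"
    by (intro exI[of _ "concat (map (\<lambda>(l1,c1). map (\<lambda>(l2,c2). (l1+l2, c1*c2)) ys) xs)"]) (simp add: trigp_mult[symmetric])
qed

lemma trig_sum: "finite S \<Longrightarrow> (\<And>i. i \<in> S \<Longrightarrow> trig (f i)) \<Longrightarrow> trig (\<lambda>x. \<Sum>i\<in>S. f i x)"
proof (induction S rule: finite_induct)
  case empty then show ?case using trig_const[of 0] by simp
next
  case (insert a S) then show ?case by (simp add: trig_add)
qed

lemma cis_cos: "(cis t + cis (-t))/2 = complex_of_real (cos t)"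
  by (simp add: cis.ctr complex_eq_iff)

lemma trig_cos: "trig (\<lambda>x. cos (l \<bullet> x + \<beta>))"
  unfolding trig_def
proof (intro exI[of _ "[(l, cis \<beta> / 2), (-l, cis (-\<beta>) / 2)]"] allI)
  fix x
  have e: "cis \<beta> * cis (l \<bullet> x) = cis (l \<bullet> x + \<beta>)" "cis (-\<beta>) * cis (-(l \<bullet> x)) = cis (-(l \<bullet> x + \<beta>))"
    by (simp_all add: cis_mult algebra_simps)
  have "trigp [(l, cis \<beta> / 2), (-l, cis (-\<beta>) / 2)] x = (cis \<beta> * cis (l \<bullet> x) + cis (-\<beta>) * cis (-(l \<bullet> x))) / 2"
    by (simp add: add_divide_distrib)
  also have "\<dots> = complex_of_real (cos (l \<bullet> x + \<beta>))"
    unfolding e by (rule cis_cos)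
  finally show "complex_of_real (cos (l \<bullet> x + \<beta>)) = trigp [(l, cis \<beta> / 2), (-l, cis (-\<beta>) / 2)] x" by simp
qed

lemma trig_rpf:
  fixes G :: "'a::euclidean_space \<Rightarrow> 'b::euclidean_space"
  assumes "real_polynomial_function p" and G: "\<And>b. b \<in> Basis \<Longrightarrow> trig (\<lambda>x. G x \<bullet> b)"
  shows "trig (\<lambda>x. p (G x))"
  using assms(1)
proof induction
  case (linear f)
  have "f (G x) = (\<Sum>b\<in>Basis. (G x \<bullet> b) * f b)" for x
  proof -
    have "f (G x) = f (\<Sum>b\<in>Basis. (G x \<bullet> b) *\<^sub>R b)" by (simp add: euclidean_representation)
    also have "\<dots> = (\<Sum>b\<in>Basis. (G x \<bullet> b) * f b)"
          by (simp add: linear_sum[OF bounded_linear.linear[OF linear]] linear.scaleR[OF bounded_linear.linear[OF linear]])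
    finally show ?thesis .
  qed
  moreover have "trig (\<lambda>x. \<Sum>b\<in>Basis. (G x \<bullet> b) * f b)"
    by (rule trig_sum) (auto intro: trig_mult G trig_const)
  ultimately show ?case by simp
next
  case (const c) then show ?case by (rule trig_const)
next
  case (add f g) from trig_add[OF add.IH] show ?case by simp
next
  case (mult f g) from trig_mult[OF mult.IH] show ?case by simp
qed

lemma cont_meas_leb: "continuous_on UNIV h \<Longrightarrow> h \<in> borel_measurable lebesgue"
  by (rule measurable_completion) (simp add: borel_measurable_continuous_onI)

lemma integrable_cis_mult:
  fixes f :: "'a::euclidean_space \<Rightarrow> real"
  assumes "integrable lebesgue f"
  shows "integrable lebesgue (\<lambda>x. cis (l \<bullet> x) * complex_of_real (f x))"
proof (rule Bochner_Integration.integrable_bound)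
  show "integrable lebesgue (\<lambda>x. complex_of_real (f x))"
    using assms by (simp add: complex_of_real_integrable_eq)
  have "continuous_on UNIV (\<lambda>x. cis (l \<bullet> x))"
    by (intro continuous_intros)
  then have "(\<lambda>x. cis (l \<bullet> x)) \<in> borel_measurable lebesgue" by (rule cont_meas_leb)
  then show "(\<lambda>x. cis (l \<bullet> x) * complex_of_real (f x)) \<in> borel_measurable lebesgue"
    using borel_measurable_integrable[OF assms] by measurable
  show "AE x in lebesgue. norm (cis (l \<bullet> x) * complex_of_real (f x)) \<le> norm (complex_of_real (f x))"
    by (simp add: norm_mult)
qed

lemma trigp_int:
  fixes f :: "'a::euclidean_space \<Rightarrow> real"
  assumes int: "integrable lebesgue f"
    and FT: "\<And>l. (LINT x|lebesgue. cis (l \<bullet> x) * complex_of_real (f x)) = 0"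
  shows "integrable lebesgue (\<lambda>x. trigp xs x * complex_of_real (f x)) \<and>
         (LINT x|lebesgue. trigp xs x * complex_of_real (f x)) = 0"
proof (induction xs)
  case Nil then show ?case by simp
next
  case (Cons p xs)
  obtain l c where p: "p = (l, c)" by (cases p)
  have i1: "integrable lebesgue (\<lambda>x. c * (cis (l \<bullet> x) * complex_of_real (f x)))"
    using integrable_cis_mult[OF int] by simp
  have eq: "(\<lambda>x. trigp (p#xs) x * complex_of_real (f x)) =
     (\<lambda>x. c * (cis (l \<bullet> x) * complex_of_real (f x)) + trigp xs x * complex_of_real (f x))"
    by (simp add: p algebra_simps)
  show ?case unfolding eq using Cons i1 FT[of l] by simp
qed

lemma trig_int:
  fixes f :: "'a::euclidean_space \<Rightarrow> real"
  assumes int: "integrable lebesgue f"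
    and FT: "\<And>l. (LINT x|lebesgue. cis (l \<bullet> x) * complex_of_real (f x)) = 0"
    and "trig h"
  shows "(LINT x|lebesgue. h x * f x) = 0"
proof -
  obtain xs where xs: "\<And>x. complex_of_real (h x) = trigp xs x" using assms(3) unfolding trig_def by blast
  have "complex_of_real (LINT x|lebesgue. h x * f x) = (CLINT x|lebesgue. complex_of_real (h x * f x))"
    by (rule integral_complex_of_real[symmetric])
  also have "\<dots> = (CLINT x|lebesgue. trigp xs x * complex_of_real (f x))"
    by (simp add: xs[symmetric])
  also have "\<dots> = 0" using trigp_int[OF int FT] by blast
  finally show ?thesis by simp
qed

lemma psi_int:
  fixes f :: "'a::euclidean_space \<Rightarrow> real" and G :: "'a \<Rightarrow> 'a" and \<Psi> :: "'a \<Rightarrow> real"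
  assumes int: "integrable lebesgue f"
    and FT: "\<And>l. (LINT x|lebesgue. cis (l \<bullet> x) * complex_of_real (f x)) = 0"
    and Gtrig: "\<And>b. b \<in> Basis \<Longrightarrow> trig (\<lambda>x. G x \<bullet> b)"
    and contG: "continuous_on UNIV G"
    and K: "compact K" "range G \<subseteq> K"
    and contP: "continuous_on K \<Psi>"
  shows "(LINT x|lebesgue. \<Psi> (G x) * f x) = 0"
proof -
  have fm: "f \<in> borel_measurable lebesgue" using int by (rule borel_measurable_integrable)
  obtain B where B: "\<And>y. y \<in> K \<Longrightarrow> \<bar>\<Psi> y\<bar> \<le> B"
    using compact_imp_bounded[OF compact_continuous_image[OF contP K(1)]] unfolding bounded_iff by auto
  have contPG: "continuous_on UNIV (\<lambda>x. \<Psi> (G x))"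
    using continuous_on_compose2[OF contP contG] K(2) by auto
  have PGm: "(\<lambda>x. \<Psi> (G x)) \<in> borel_measurable lebesgue" by (rule cont_meas_leb[OF contPG])
  have intPG: "integrable lebesgue (\<lambda>x. \<Psi> (G x) * f x)"
  proof (rule Bochner_Integration.integrable_bound)
    show "integrable lebesgue (\<lambda>x. B * f x)" using int by simp
    show "(\<lambda>x. \<Psi> (G x) * f x) \<in> borel_measurable lebesgue" using PGm fm by measurable
    show "AE x in lebesgue. norm (\<Psi> (G x) * f x) \<le> norm (B * f x)"
    proof (rule AE_I2)
      fix x have "\<bar>\<Psi> (G x)\<bar> \<le> B" using B K(2) by auto
      then have "\<bar>\<Psi> (G x)\<bar> * \<bar>f x\<bar> \<le> \<bar>B\<bar> * \<bar>f x\<bar>" by (intro mult_right_mono) auto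
      then show "norm (\<Psi> (G x) * f x) \<le> norm (B * f x)" by (simp add: abs_mult)
    qed
  qed
  define I where "I = (LINT x|lebesgue. \<Psi> (G x) * f x)"
  define A where "A = (LINT x|lebesgue. \<bar>f x\<bar>)"
  have bound: "\<bar>I\<bar> \<le> e * A" if e: "e > 0" for e
  proof -
    obtain p where p: "polynomial_function p" "\<forall>y\<in>K. norm (\<Psi> y - p y) < e"
      using Stone_Weierstrass_polynomial_function[OF K(1) contP e] by blast
    have rp: "real_polynomial_function p"
      using p(1) by (simp add: polynomial_function_iff_Basis_inner)
    have tp: "trig (\<lambda>x. p (G x))" by (rule trig_rpf[OF rp Gtrig])
    have contpG: "continuous_on UNIV (\<lambda>x. p (G x))"
      using continuous_on_compose[OF contG continuous_on_polymonial_function[OF p(1)]] by (simp add: o_def)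
    have dm: "(\<lambda>x. (\<Psi> (G x) - p (G x)) * f x) \<in> borel_measurable lebesgue"
      using PGm cont_meas_leb[OF contpG] fm by measurable
    have dle: "\<bar>\<Psi> (G x) - p (G x)\<bar> \<le> e" for x
    proof -
      have "G x \<in> K" using K(2) by auto
      then have "norm (\<Psi> (G x) - p (G x)) < e" using p(2) by blast
      then show ?thesis by simp
    qed
    have intd: "integrable lebesgue (\<lambda>x. (\<Psi> (G x) - p (G x)) * f x)"
    proof (rule Bochner_Integration.integrable_bound)
      show "integrable lebesgue (\<lambda>x. e * f x)" using int by simp
      show "(\<lambda>x. (\<Psi> (G x) - p (G x)) * f x) \<in> borel_measurable lebesgue" by (rule dm)
      show "AE x in lebesgue. norm ((\<Psi> (G x) - p (G x)) * f x) \<le> norm (e * f x)"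
      proof (rule AE_I2)
        fix x
        have "\<bar>\<Psi> (G x) - p (G x)\<bar> * \<bar>f x\<bar> \<le> \<bar>e\<bar> * \<bar>f x\<bar>" using dle[of x] e by (intro mult_right_mono) auto
        then show "norm ((\<Psi> (G x) - p (G x)) * f x) \<le> norm (e * f x)" by (simp add: abs_mult)
      qed
    qed
    have eqf: "(\<lambda>x. p (G x) * f x) = (\<lambda>x. \<Psi> (G x) * f x - (\<Psi> (G x) - p (G x)) * f x)"
      by (auto simp: algebra_simps)
    have intp: "integrable lebesgue (\<lambda>x. p (G x) * f x)"
      unfolding eqf by (rule Bochner_Integration.integrable_diff[OF intPG intd])
    have z: "(LINT x|lebesgue. p (G x) * f x) = 0" by (rule trig_int[OF int FT tp])
    have "(LINT x|lebesgue. (\<Psi> (G x) - p (G x)) * f x) = I - (LINT x|lebesgue. p (G x) * f x)"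
      unfolding I_def eqf using intPG intd by (simp add: Bochner_Integration.integral_diff)
    then have "I = (LINT x|lebesgue. (\<Psi> (G x) - p (G x)) * f x)" using z by simp
    also have "\<bar>\<dots>\<bar> \<le> (LINT x|lebesgue. norm ((\<Psi> (G x) - p (G x)) * f x))"
      using integral_norm_bound[of lebesgue "\<lambda>x. (\<Psi> (G x) - p (G x)) * f x"] by simp
    also have "\<dots> \<le> (LINT x|lebesgue. e * \<bar>f x\<bar>)"
    proof (rule integral_mono)
      show "integrable lebesgue (\<lambda>x. norm ((\<Psi> (G x) - p (G x)) * f x))" using intd by simp
      show "integrable lebesgue (\<lambda>x. e * \<bar>f x\<bar>)" using int by simp
      fix x
      show "norm ((\<Psi> (G x) - p (G x)) * f x) \<le> e * \<bar>f x\<bar>"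
        using dle[of x] by (simp add: abs_mult mult_right_mono)
    qed
    also have "\<dots> = e * A" by (simp add: A_def)
    finally show ?thesis .
  qed
  have A0: "A \<ge> 0" unfolding A_def by (rule integral_nonneg_AE) auto
  show ?thesis
  proof (rule ccontr)
    assume "(LINT x|lebesgue. \<Psi> (G x) * f x) \<noteq> 0"
    then have I0: "\<bar>I\<bar> > 0" by (simp add: I_def)
    define e where "e = \<bar>I\<bar> / (2 * (A + 1))"
    have e0: "e > 0" using I0 A0 by (simp add: e_def)
    have "e * A < \<bar>I\<bar>"
    proof -
      have eA: "e * A = \<bar>I\<bar> * (A / (2 * (A + 1)))" by (simp add: e_def)
      have "A / (2 * (A + 1)) < 1" using A0 by (simp add: divide_less_eq)
      then have "\<bar>I\<bar> * (A / (2 * (A + 1))) < \<bar>I\<bar> * 1" using I0 by (intro mult_strict_left_mono) auto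
      then show ?thesis using eA by simp
    qed
    with bound[OF e0] show False by simp
  qed
qed

lemma clip_lim: "(\<lambda>k::nat. min 1 (max 0 (real k * d))) \<longlonglongrightarrow> (if c < t then 1 else 0::real)" if "d = t - c"
proof (cases "c < t")
  case True
  then have d: "d > 0" using that by simp
  obtain N :: nat where N: "1 / d < real N" using reals_Archimedean2 by blast
  have "eventually (\<lambda>k. min 1 (max 0 (real k * d)) = 1) sequentially"
  proof (rule eventually_sequentiallyI[of N])
    fix k assume "N \<le> k"
    then have "1 / d < real k" using N by (meson le_less_trans not_le of_nat_le_iff order_less_imp_le order_trans)
    then have "1 \<le> real k * d" using d by (simp add: field_simps)
    then show "min 1 (max 0 (real k * d)) = 1" by simp
  qed
  then show ?thesis using True by (simp add: tendsto_eventually)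
next
  case False
  then have "d \<le> 0" using that by simp
  then have "min 1 (max 0 (real k * d)) = 0" for k by (simp add: mult_nonneg_nonpos)
  then show ?thesis using False by simp
qed

lemma chi_int:
  fixes f :: "'a::euclidean_space \<Rightarrow> real" and c \<beta> :: "'a \<Rightarrow> real" and lv :: "'a \<Rightarrow> 'a"
  assumes int: "integrable lebesgue f"
    and FT: "\<And>l. (LINT x|lebesgue. cis (l \<bullet> x) * complex_of_real (f x)) = 0"
  shows "(LINT x|lebesgue. (\<Prod>b\<in>Basis. if c b < cos (lv b \<bullet> x + \<beta> b) then 1 else 0) * f x) = 0"
proof -
  define G where "G x = (\<Sum>b\<in>Basis. cos (lv b \<bullet> x + \<beta> b) *\<^sub>R b)" for x :: 'a
  have Gb: "G x \<bullet> b = cos (lv b \<bullet> x + \<beta> b)" if "b \<in> Basis" for x b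
    unfolding G_def using that by (simp add: inner_sum_left_Basis)
  define \<Psi> where "\<Psi> k y = (\<Prod>b\<in>Basis. min 1 (max 0 (real k * (y \<bullet> b - c b))))" for k :: nat and y :: 'a
  have fm: "f \<in> borel_measurable lebesgue" using int by (rule borel_measurable_integrable)
  have Gtrig: "trig (\<lambda>x. G x \<bullet> b)" if "b \<in> Basis" for b
    using trig_cos[of "lv b" "\<beta> b"] Gb[OF that] by simp
  have contG: "continuous_on UNIV G" unfolding G_def by (intro continuous_intros)
  have K: "compact (cbox (-One) (One::'a))" "range G \<subseteq> cbox (-One) One"
    by (auto simp: mem_box Gb inner_minus_left)
  have z: "(LINT x|lebesgue. \<Psi> k (G x) * f x) = 0" for k
    by (rule psi_int[OF int FT Gtrig contG K]) (auto simp: \<Psi>_def intro!: continuous_intros)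
  have PsiG: "\<Psi> k (G x) = (\<Prod>b\<in>Basis. min 1 (max 0 (real k * (cos (lv b \<bullet> x + \<beta> b) - c b))))" for k x
    unfolding \<Psi>_def by (intro prod.cong) (auto simp: Gb)
  have cm: "(\<lambda>x. cos (lv b \<bullet> x + \<beta> b)) \<in> borel_measurable lebesgue" for b
    by (rule cont_meas_leb) (intro continuous_intros)
  have lim: "(\<lambda>k. LINT x|lebesgue. \<Psi> k (G x) * f x) \<longlonglongrightarrow>
      (LINT x|lebesgue. (\<Prod>b\<in>Basis. if c b < cos (lv b \<bullet> x + \<beta> b) then 1 else 0) * f x)"
  proof (rule integral_dominated_convergence[where w="\<lambda>x. \<bar>f x\<bar>"])
    show "(\<lambda>x. (\<Prod>b\<in>Basis. if c b < cos (lv b \<bullet> x + \<beta> b) then 1 else 0) * f x) \<in> borel_measurable lebesgue"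
      using cm fm by measurable
    show "(\<lambda>x. \<Psi> k (G x) * f x) \<in> borel_measurable lebesgue" for k
      unfolding PsiG using cm fm by measurable
    show "integrable lebesgue (\<lambda>x. \<bar>f x\<bar>)" using int by simp
    show "AE x in lebesgue. (\<lambda>k. \<Psi> k (G x) * f x) \<longlonglongrightarrow>
        (\<Prod>b\<in>Basis. if c b < cos (lv b \<bullet> x + \<beta> b) then 1 else 0) * f x"
      unfolding PsiG by (intro AE_I2 tendsto_mult tendsto_const tendsto_prod clip_lim) auto
    show "AE x in lebesgue. norm (\<Psi> k (G x) * f x) \<le> \<bar>f x\<bar>" for k
    proof (rule AE_I2)
      fix x
      have "0 \<le> \<Psi> k (G x)" "\<Psi> k (G x) \<le> 1" unfolding \<Psi>_def
        by (auto intro!: prod_nonneg prod_le_1)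
      then show "norm (\<Psi> k (G x) * f x) \<le> \<bar>f x\<bar>"
        by (simp add: abs_mult mult_left_le_one_le)
    qed
  qed
  then show ?thesis unfolding z by (simp add: LIMSEQ_const_iff)
qed

lemma cos_sel:
  fixes h L t :: real
  assumes h: "0 < h" "h < L" and t: "\<bar>t\<bar> < 2 * L - h"
  shows "cos (pi * h / L) < cos (pi * t / L) \<longleftrightarrow> \<bar>t\<bar> < h"
proof -
  have L: "L > 0" using h by simp
  have ct: "cos (pi * t / L) = cos (pi * \<bar>t\<bar> / L)"
    using cos_abs_real[of "pi * t / L"] L by (simp add: abs_mult abs_divide)
  have hpi: "pi * h / L \<le> pi" using h L by (simp add: field_simps)
  show ?thesis
  proof (cases "\<bar>t\<bar> < h")
    case True
    have "cos (pi * h / L) < cos (pi * \<bar>t\<bar> / L)"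
      by (rule cos_monotone_0_pi) (use True L hpi in \<open>auto simp: field_simps\<close>)
    then show ?thesis using True ct by simp
  next
    case False
    have "cos (pi * \<bar>t\<bar> / L) \<le> cos (pi * h / L)"
    proof (cases "\<bar>t\<bar> \<le> L")
      case True
      show ?thesis
        by (rule cos_monotone_0_pi_le) (use True False L h in \<open>auto simp: field_simps\<close>)
    next
      case F2: False
      have "cos (pi * \<bar>t\<bar> / L) = cos (2 * pi - pi * \<bar>t\<bar> / L)" by (simp add: cos_2pi_minus)
      also have "2 * pi - pi * \<bar>t\<bar> / L = pi * (2 * L - \<bar>t\<bar>) / L" using L by (simp add: field_simps)
      also have "cos (pi * (2 * L - \<bar>t\<bar>) / L) \<le> cos (pi * h / L)"
      proof (rule cos_monotone_0_pi_le)
        show "0 \<le> pi * h / L" using h L by simp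
        show "pi * h / L \<le> pi * (2 * L - \<bar>t\<bar>) / L"
          by (intro divide_right_mono mult_left_mono) (use t L in auto)
        have "pi * (2 * L - \<bar>t\<bar>) / L \<le> pi * L / L"
          by (intro divide_right_mono mult_left_mono) (use F2 L in auto)
        then show "pi * (2 * L - \<bar>t\<bar>) / L \<le> pi" using L by simp
      qed
      finally show ?thesis .
    qed
    then show ?thesis using False ct by simp
  qed
qed

lemma prod_if_01: "finite S \<Longrightarrow> (\<Prod>i\<in>S. if P i then 1 else 0::real) = (if \<forall>i\<in>S. P i then 1 else 0)"
  by (auto simp: prod_zero_iff intro!: prod.neutral)

lemma box_int:
  fixes f :: "'a::euclidean_space \<Rightarrow> real"
  assumes int: "integrable lebesgue f"
    and FT: "\<And>l. (LINT x|lebesgue. cis (l \<bullet> x) * complex_of_real (f x)) = 0"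
  shows "(LINT x|lebesgue. indicator (box a b) x * f x) = 0"
proof (cases "\<forall>i\<in>Basis. a \<bullet> i < b \<bullet> i")
  case False
  then have "box a b = {}" by (auto simp: box_eq_empty not_less)
  then show ?thesis by simp
next
  case True
  define m where "m i = (a \<bullet> i + b \<bullet> i) / 2" for i
  define h where "h i = (b \<bullet> i - a \<bullet> i) / 2" for i
  have h0: "h i > 0" if "i \<in> Basis" for i using True that by (simp add: h_def)
  define L0 where "L0 = (\<Sum>i\<in>Basis. h i + \<bar>m i\<bar> + 1)"
  have h0': "0 \<le> h i" if "i \<in> Basis" for i using h0[OF that] by simp
  have L0i: "h i + \<bar>m i\<bar> + 1 \<le> L0" if "i \<in> Basis" for i
    unfolding L0_def
    by (rule member_le_sum) (use that in \<open>auto intro!: add_nonneg_nonneg h0'\<close>)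
  define T where "T L = UNIV - box (- (L *\<^sub>R One)) (L *\<^sub>R One :: 'a)" for L :: real
  have fm: "f \<in> borel_measurable lebesgue" using int by (rule borel_measurable_integrable)
  define I where "I = (LINT x|lebesgue. indicator (box a b) x * f x)"
  have bnd: "\<bar>I\<bar> \<le> (LINT x|lebesgue. indicator (T L) x * \<bar>f x\<bar>)" if L: "L0 \<le> L" for L
  proof -
    have Lpos: "L > 0" "h i < L" "\<bar>m i\<bar> + h i + 1 \<le> L" if "i \<in> Basis" for i
      using L0i[OF that] L h0[OF that] by auto
    define chi where "chi x = (\<Prod>i\<in>Basis. if cos (pi * h i / L) < cos (((pi / L) *\<^sub>R i) \<bullet> x + - (pi / L * m i)) then 1 else 0::real)" for x
    have z: "(LINT x|lebesgue. chi x * f x) = 0"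
      unfolding chi_def by (rule chi_int[OF int FT])
    have chi_eq: "chi x = indicator (box a b) x" if x: "x \<notin> T L" for x
    proof -
      have xi: "\<bar>x \<bullet> i\<bar> < L" if "i \<in> Basis" for i
        using x that by (auto simp: T_def mem_box abs_less_iff)
      have "(cos (pi * h i / L) < cos (((pi / L) *\<^sub>R i) \<bullet> x + - (pi / L * m i))) \<longleftrightarrow> (a \<bullet> i < x \<bullet> i \<and> x \<bullet> i < b \<bullet> i)"
        if i: "i \<in> Basis" for i
      proof -
        have e: "((pi / L) *\<^sub>R i) \<bullet> x + - (pi / L * m i) = pi * (x \<bullet> i - m i) / L"
          using Lpos(1)[OF i] by (simp add: inner_commute field_simps)
        have "\<bar>x \<bullet> i - m i\<bar> < 2 * L - h i" using xi[OF i] Lpos[OF i] by auto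
        then have "cos (pi * h i / L) < cos (pi * (x \<bullet> i - m i) / L) \<longleftrightarrow> \<bar>x \<bullet> i - m i\<bar> < h i"
          by (intro cos_sel) (use Lpos[OF i] h0[OF i] in auto)
        also have "\<dots> \<longleftrightarrow> (a \<bullet> i < x \<bullet> i \<and> x \<bullet> i < b \<bullet> i)"
          by (auto simp: m_def h_def abs_less_iff field_simps)
        finally show ?thesis unfolding e .
      qed
      then show ?thesis unfolding chi_def
        by (simp add: prod_if_01 mem_box indicator_def)
    qed
    have chi01: "0 \<le> chi x \<and> chi x \<le> 1" for x
      unfolding chi_def by (auto intro!: prod_nonneg prod_le_1)
    have dle: "\<bar>chi x - indicator (box a b) x\<bar> \<le> indicator (T L) x" for x
      using chi_eq[of x] chi01[of x] by (cases "x \<in> T L") (auto simp: indicator_def)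
    have cm: "(\<lambda>x. cos (((pi / L) *\<^sub>R i) \<bullet> x + - (pi / L * m i))) \<in> borel_measurable lebesgue" for i
      by (rule cont_meas_leb) (intro continuous_intros)
    have chim: "chi \<in> borel_measurable lebesgue" unfolding chi_def using cm by measurable
    have boxm: "box a b \<in> sets lebesgue" by simp
    have Tm: "T L \<in> sets lebesgue" unfolding T_def by simp
    have int1: "integrable lebesgue (\<lambda>x. indicator (box a b) x * f x)"
      using integrable_mult_indicator[OF boxm int] by simp
    have int2: "integrable lebesgue (\<lambda>x. chi x * f x)"
    proof (rule Bochner_Integration.integrable_bound)
      show "integrable lebesgue f" by (rule int)
      show "(\<lambda>x. chi x * f x) \<in> borel_measurable lebesgue" using chim fm by measurable
      show "AE x in lebesgue. norm (chi x * f x) \<le> norm (f x)"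
        using chi01 by (auto simp: abs_mult mult_left_le_one_le)
    qed
    have int3: "integrable lebesgue (\<lambda>x. indicator (T L) x * \<bar>f x\<bar>)"
      using integrable_mult_indicator[OF Tm integrable_abs[OF int]] by simp
    have "I = - (LINT x|lebesgue. (chi x - indicator (box a b) x) * f x)"
      using z int1 int2 by (simp add: I_def left_diff_distrib Bochner_Integration.integral_diff)
    then have "\<bar>I\<bar> = \<bar>LINT x|lebesgue. (chi x - indicator (box a b) x) * f x\<bar>" by simp
    also have "\<dots> \<le> (LINT x|lebesgue. norm ((chi x - indicator (box a b) x) * f x))"
      using integral_norm_bound[of lebesgue "\<lambda>x. (chi x - indicator (box a b) x) * f x"] by simp
    also have "\<dots> \<le> (LINT x|lebesgue. indicator (T L) x * \<bar>f x\<bar>)"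
    proof (rule integral_mono)
      have "integrable lebesgue (\<lambda>x. (chi x * f x) - indicator (box a b) x * f x)"
        using int1 int2 by simp
      then show "integrable lebesgue (\<lambda>x. norm ((chi x - indicator (box a b) x) * f x))"
        by (simp add: left_diff_distrib)
      show "integrable lebesgue (\<lambda>x. indicator (T L) x * \<bar>f x\<bar>)" by (rule int3)
      fix x show "norm ((chi x - indicator (box a b) x) * f x) \<le> indicator (T L) x * \<bar>f x\<bar>"
        using dle[of x] by (simp add: abs_mult mult_right_mono)
    qed
    finally show ?thesis .
  qed
  have lim: "(\<lambda>n::nat. LINT x|lebesgue. indicator (T (real n)) x * \<bar>f x\<bar>) \<longlonglongrightarrow> (LINT (x::'a)|lebesgue. 0)"
  proof (rule integral_dominated_convergence[where w="\<lambda>x. \<bar>f x\<bar>" and s="\<lambda>n x. indicator (T (real n)) x * \<bar>f x\<bar>" and f="\<lambda>x. 0"])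
    show "(\<lambda>x. 0::real) \<in> borel_measurable lebesgue" by simp
    show "(\<lambda>x. indicator (T (real n)) x * \<bar>f x\<bar>) \<in> borel_measurable lebesgue" for n
    proof -
      have "T (real n) \<in> sets lebesgue" unfolding T_def by simp
      then show ?thesis using fm by measurable
    qed
    show "integrable lebesgue (\<lambda>x. \<bar>f x\<bar>)" using int by simp
    show "AE x in lebesgue. norm (indicator (T (real n)) x * \<bar>f x\<bar>) \<le> \<bar>f x\<bar>" for n
      by (auto simp: indicator_def)
    show "AE x in lebesgue. (\<lambda>n. indicator (T (real n)) x * \<bar>f x\<bar>) \<longlonglongrightarrow> 0"
    proof (rule AE_I2)
      fix x :: 'a
      obtain N :: nat where N: "norm x < real N" using reals_Archimedean2 by blast
      have "eventually (\<lambda>n. indicator (T (real n)) x * \<bar>f x\<bar> = 0) sequentially"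
      proof (rule eventually_sequentiallyI[of N])
        fix n assume "N \<le> n"
        then have "norm x < real n" using N by (meson less_le_trans of_nat_le_iff)
        then have "x \<notin> T (real n)"
          using Basis_le_norm[of _ x] by (force simp: T_def mem_box abs_less_iff)
        then show "indicator (T (real n)) x * \<bar>f x\<bar> = 0" by simp
      qed
      then show "(\<lambda>n. indicator (T (real n)) x * \<bar>f x\<bar>) \<longlonglongrightarrow> 0" by (simp add: tendsto_eventually)
    qed
  qed
  have "\<bar>I\<bar> \<le> 0"
  proof (rule LIMSEQ_le_const[OF lim[simplified]])
    obtain N :: nat where "L0 < real N" using reals_Archimedean2 by blast
    then show "\<exists>N. \<forall>n\<ge>N. \<bar>I\<bar> \<le> (LINT x|lebesgue. indicator (T (real n)) x * \<bar>f x\<bar>)"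
      by (intro exI[of _ N] allI impI bnd) (meson le_less_trans less_le of_nat_le_iff order_trans less_imp_le)
  qed
  then show ?thesis by (simp add: I_def)
qed

lemma fsigma_borel: "fsigma C \<Longrightarrow> C \<in> sets borel"
proof (induction rule: fsigma.induct)
  case (1 F)
  then have "\<And>n. F n \<in> sets borel" by (simp add: borel_closed)
  then show ?case by (intro sets.countable_UN) auto
qed

lemma fourier_unique:
  fixes f :: "'a::euclidean_space \<Rightarrow> real"
  assumes int: "integrable lebesgue f"
    and FT: "\<And>l. (LINT x|lebesgue. cis (l \<bullet> x) * complex_of_real (f x)) = 0"
  shows "AE x in lebesgue. f x = 0"
proof -
  have fm: "f \<in> borel_measurable lebesgue" using int by (rule borel_measurable_integrable)
  have tot: "(LINT x|lebesgue. f x) = 0"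
  proof -
    have "complex_of_real (LINT x|lebesgue. f x) = (CLINT x|lebesgue. complex_of_real (f x))"
      by (rule integral_complex_of_real[symmetric])
    also have "\<dots> = 0" using FT[of 0] by simp
    finally show ?thesis by simp
  qed
  have intA: "integrable lebesgue (\<lambda>x. indicator A x * f x)" if "A \<in> sets lebesgue" for A
    using integrable_mult_indicator[OF that int] by simp
  have borelP: "(LINT x|lebesgue. indicator A x * f x) = 0" if A: "A \<in> sets borel" for A
  proof -
    let ?G = "range (\<lambda>(a, b). box a b :: 'a set)"
    have "Int_stable ?G" by (auto simp: Int_stable_def box_Int_box)
    moreover have "?G \<subseteq> Pow UNIV" by auto
    moreover have "A \<in> sigma_sets UNIV ?G" using A unfolding borel_eq_box by simp
    ultimately show ?thesis
    proof (induction rule: sigma_sets_induct_disjoint)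
      case (basic A)
      then obtain a b where "A = box a b" by auto
      then show ?case using box_int[OF int FT] by simp
    next
      case empty then show ?case by simp
    next
      case (compl A)
      then have Ab: "A \<in> sets borel" by (simp add: borel_eq_box)
      then have Al: "A \<in> sets lebesgue" by simp
      have "(\<lambda>x. indicator (UNIV - A) x * f x) = (\<lambda>x. f x - indicator A x * f x)"
        by (auto simp: indicator_def)
      then show ?case using compl.IH tot int intA[OF Al] by (simp add: Bochner_Integration.integral_diff)
    next
      case (union A)
      have Al: "A i \<in> sets lebesgue" for i
      proof -
        have "A i \<in> sigma_sets UNIV (range (\<lambda>(a, b). box a b :: 'a set))" using union(2) by auto
        then have "A i \<in> sets borel" by (simp add: borel_eq_box)
        then show ?thesis by simp
      qed
      have Un: "(\<Union>i<n. A i) \<in> sets lebesgue" for n using Al by auto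
      have fin: "(LINT x|lebesgue. indicator (\<Union>i<n. A i) x * f x) = 0" for n
      proof (induction n)
        case 0 then show ?case by simp
      next
        case (Suc n)
        have d: "A n \<inter> (\<Union>i<n. A i) = {}"
          using union(1) unfolding disjoint_family_on_def by (metis (no_types, lifting) UN_iff disjoint_iff less_irrefl lessThan_iff UNIV_I)
        have "(\<lambda>x. indicator (\<Union>i<Suc n. A i) x * f x) = (\<lambda>x. indicator (A n) x * f x + indicator (\<Union>i<n. A i) x * f x)"
        proof
          fix x
          have "(\<Union>i<Suc n. A i) = A n \<union> (\<Union>i<n. A i)" by (auto simp: lessThan_Suc)
          then show "indicator (\<Union>i<Suc n. A i) x * f x = indicator (A n) x * f x + indicator (\<Union>i<n. A i) x * f x"
            using d by (auto simp: indicator_def)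
        qed
        then show ?case using Suc.IH union(3)[of n] intA[OF Al[of n]] intA[OF Un[of n]]
          by (simp add: Bochner_Integration.integral_add)
      qed
      have lim: "(\<lambda>n. LINT x|lebesgue. indicator (\<Union>i<n. A i) x * f x) \<longlonglongrightarrow>
                 (LINT x|lebesgue. indicator (\<Union>i. A i) x * f x)"
      proof (rule integral_dominated_convergence[where w="\<lambda>x. \<bar>f x\<bar>"])
        have "(\<Union>i. A i) \<in> sets lebesgue" using Al by auto
        then show "(\<lambda>x. indicator (\<Union>i. A i) x * f x) \<in> borel_measurable lebesgue" using fm by measurable
        show "(\<lambda>x. indicator (\<Union>i<n. A i) x * f x) \<in> borel_measurable lebesgue" for n
          using Un[of n] fm by measurable
        show "integrable lebesgue (\<lambda>x. \<bar>f x\<bar>)" using int by simp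
        show "AE x in lebesgue. (\<lambda>n. indicator (\<Union>i<n. A i) x * f x) \<longlonglongrightarrow> indicator (\<Union>i. A i) x * f x"
          by (intro AE_I2 tendsto_mult tendsto_const LIMSEQ_indicator_UN)
        show "AE x in lebesgue. norm (indicator (\<Union>i<n. A i) x * f x) \<le> \<bar>f x\<bar>" for n
          by (auto simp: indicator_def)
      qed
      then show ?case unfolding fin by (simp add: LIMSEQ_const_iff)
    qed
  qed
  have lebP: "set_lebesgue_integral lebesgue S f = 0" if S: "S \<in> sets lebesgue" for S
  proof -
    obtain C T where C: "fsigma C" and T: "T \<in> null_sets lebesgue" and CT: "C \<union> T = S" "disjnt C T"
      using lebesgue_set_almost_fsigma[OF S] by metis
    have "AE x in lebesgue. x \<notin> T" using T by (rule AE_not_in)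
    then have "AE x in lebesgue. indicator S x *\<^sub>R f x = indicator C x * f x"
      by eventually_elim (use CT in \<open>auto simp: indicator_def\<close>)
    have Cl: "C \<in> sets lebesgue" using fsigma_borel[OF C] by simp
    have m2: "(\<lambda>x. indicator C x * f x) \<in> borel_measurable lebesgue" using Cl fm by measurable
    have m1: "(\<lambda>x. indicator S x *\<^sub>R f x) \<in> borel_measurable lebesgue" using S fm by measurable
    from \<open>AE x in lebesgue. indicator S x *\<^sub>R f x = indicator C x * f x\<close>
    have "set_lebesgue_integral lebesgue S f = (LINT x|lebesgue. indicator C x * f x)"
      unfolding set_lebesgue_integral_def by (rule integral_cong_AE[OF m1 m2])
    also have "\<dots> = 0" by (rule borelP[OF fsigma_borel[OF C]])
    finally show ?thesis .
  qed
  show ?thesis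
  proof -
    have "AE x in lebesgue. f x = (\<lambda>x. 0::real) x"
    proof (rule density_unique_real[OF int integrable_zero])
      fix A :: "'a set" assume "A \<in> sets lebesgue"
      then show "set_lebesgue_integral lebesgue A f = set_lebesgue_integral lebesgue A (\<lambda>x. 0)"
        using lebP by (simp add: set_lebesgue_integral_def)
    qed
    then show ?thesis by simp
  qed
qed



lemma decay_lim:
  fixes g :: "real \<Rightarrow> real"
  assumes even: "\<And>s. g (-s) = g s"
    and s0: "s0 \<ge> 0" and c: "c > 0"
    and dec: "\<forall>s. s \<ge> s0 \<and> s > 0 \<longrightarrow> (g s)\<^sup>2 \<le> c / s ^ n" and n: "n \<ge> 1"
    and d: "d \<noteq> 0"
  shows "((\<lambda>r. g (r * d + t)) \<longlongrightarrow> 0) at_top"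
proof -
  have bnd: "\<bar>g s\<bar> \<le> sqrt (c / \<bar>s\<bar>)" if s: "\<bar>s\<bar> \<ge> max s0 1" for s
  proof -
    have gs: "g s = g \<bar>s\<bar>"
    proof (cases "s \<ge> 0")
      case True then show ?thesis by simp
    next
      case False then have "\<bar>s\<bar> = - s" by simp
      then show ?thesis using even[of s] by simp
    qed
    have s1: "\<bar>s\<bar> \<ge> 1" using s by simp
    have "(g \<bar>s\<bar>)\<^sup>2 \<le> c / \<bar>s\<bar> ^ n" using dec s by auto
    also have "\<dots> \<le> c / \<bar>s\<bar>"
    proof (rule divide_left_mono)
      have "\<bar>s\<bar> ^ 1 \<le> \<bar>s\<bar> ^ n" by (rule power_increasing[OF n s1])
      then show "\<bar>s\<bar> \<le> \<bar>s\<bar> ^ n" by simp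
      show "0 \<le> c" using c by simp
      show "0 < \<bar>s\<bar> ^ n * \<bar>s\<bar>" using s1 by simp
    qed
    finally have "\<bar>g s\<bar>\<^sup>2 \<le> c / \<bar>s\<bar>" using gs by simp
    then show ?thesis by (rule real_le_rsqrt)
  qed
  have ev: "eventually (\<lambda>r. \<bar>d\<bar> * r - \<bar>t\<bar> \<le> \<bar>r * d + t\<bar>) at_top"
    using eventually_ge_at_top[of "0::real"]
  proof eventually_elim
    case (elim r)
    have "\<bar>r * d\<bar> = \<bar>d\<bar> * r" using elim by (simp add: abs_mult)
    then show ?case by linarith
  qed
  have dpos: "\<bar>d\<bar> > 0" using d by simp
  have lim0: "filterlim (\<lambda>r. \<bar>d\<bar> * r - \<bar>t\<bar>) at_top at_top"
    using dpos by real_asymp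
  have lim1: "filterlim (\<lambda>r. \<bar>r * d + t\<bar>) at_top at_top"
    by (rule filterlim_at_top_mono[OF lim0 ev])
  have lim2: "((\<lambda>r. sqrt (c / \<bar>r * d + t\<bar>)) \<longlongrightarrow> 0) at_top"
  proof -
    have "((\<lambda>u. sqrt (c / u)) \<longlongrightarrow> 0) at_top" using c by real_asymp
    from filterlim_compose[OF this lim1] show ?thesis by (simp add: o_def)
  qed
  show ?thesis
  proof (rule Lim_null_comparison[OF _ lim2])
    from lim1 have "eventually (\<lambda>r. max s0 1 \<le> \<bar>r * d + t\<bar>) at_top"
      unfolding filterlim_at_top by blast
    then show "eventually (\<lambda>r. norm (g (r * d + t)) \<le> sqrt (c / \<bar>r * d + t\<bar>)) at_top"
      by eventually_elim (simp add: bnd)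
  qed
qed

theorem lemma1:
  fixes k :: nat and a :: "nat \<Rightarrow> real"
    and f :: "nat \<Rightarrow> real \<Rightarrow> 'a::euclidean_space \<Rightarrow> real"
    and g :: "nat \<Rightarrow> real \<Rightarrow> real"
    and F :: "real \<Rightarrow> 'a \<Rightarrow> real"
    and C D :: "nat \<Rightarrow> real"
  assumes a0: "a 0 = 0"
    and a_mono: "\<And>i j. i < j \<Longrightarrow> j \<le> k \<Longrightarrow> a i < a j"
    and rad: "\<And>j r. j \<le> k \<Longrightarrow> r > 0 \<Longrightarrow> radial (f j r)"
    and nz: "\<And>j r. j \<le> k \<Longrightarrow> r > 0 \<Longrightarrow> ess_nonzero (f j r)"
    and L1: "\<And>j r. j \<le> k \<Longrightarrow> r > 0 \<Longrightarrow> integrable lebesgue (f j r)"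
    and L2: "\<And>j r. j \<le> k \<Longrightarrow> r > 0 \<Longrightarrow> integrable lebesgue (\<lambda>x. (f j r x)\<^sup>2)"
    and fourier: "\<And>j r lam. j \<le> k \<Longrightarrow> r > 0 \<Longrightarrow>
       complex_of_real (1 / r ^ DIM('a)) *
         (LINT x|lebesgue. cis (lam \<bullet> x) * complex_of_real (f j r x))
       = complex_of_real (g j (r * (norm lam - a j)))"
    and g_even: "\<And>j s. j \<le> k \<Longrightarrow> g j (- s) = g j s"
    and g_decay: "\<And>j. j \<le> k \<Longrightarrow> \<exists>s0 c. s0 \<ge> 0 \<and> c > 0 \<and>
       (\<forall>s. s \<ge> s0 \<and> s > 0 \<longrightarrow> (g j s)\<^sup>2 \<le> c / s ^ DIM('a))"
    and repC: "\<And>r x. r > 0 \<Longrightarrow> F r x = (\<Sum>j\<le>k. C j * f j r x)"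
    and repD: "\<And>r x. r > 0 \<Longrightarrow> F r x = (\<Sum>j\<le>k. D j * f j r x)"
  shows "\<forall>j\<le>k. C j = D j"
proof (rule ccontr)
  assume "\<not> (\<forall>j\<le>k. C j = D j)"
  then obtain m where m: "m \<le> k" "C m \<noteq> D m" by auto
  define E where "E j = C j - D j" for j
  have Em: "E m \<noteq> 0" using m by (simp add: E_def)
  have comb0: "(\<Sum>j\<le>k. E j * f j r x) = 0" if "r > 0" for r x
    using repC[OF that, of x] repD[OF that, of x]
    by (simp add: E_def left_diff_distrib sum_subtractf)
  have gsum: "(\<Sum>j\<le>k. E j * g j (r * (norm lam - a j))) = 0" if r: "r > 0" for r and lam :: 'a
  proof -
    have ints: "integrable lebesgue (\<lambda>x. complex_of_real (E j) * (cis (lam \<bullet> x) * complex_of_real (f j r x)))"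
      if "j \<in> {..k}" for j
      using integrable_cis_mult[OF L1[OF _ r]] that by simp
    have eqf: "(\<lambda>x. cis (lam \<bullet> x) * complex_of_real (\<Sum>j\<le>k. E j * f j r x))
       = (\<lambda>x. \<Sum>j\<le>k. complex_of_real (E j) * (cis (lam \<bullet> x) * complex_of_real (f j r x)))"
      by (simp add: sum_distrib_left algebra_simps)
    have "(\<Sum>j\<le>k. complex_of_real (E j) * (CLINT x|lebesgue. cis (lam \<bullet> x) * complex_of_real (f j r x)))
        = (CLINT x|lebesgue. cis (lam \<bullet> x) * complex_of_real (\<Sum>j\<le>k. E j * f j r x))"
      unfolding eqf by (subst Bochner_Integration.integral_sum[OF ints]) auto
    also have "\<dots> = 0" using comb0[OF r] by simp
    finally have s0: "(\<Sum>j\<le>k. complex_of_real (E j) * (CLINT x|lebesgue. cis (lam \<bullet> x) * complex_of_real (f j r x))) = 0" .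
    have "(\<Sum>j\<le>k. complex_of_real (E j) * complex_of_real (g j (r * (norm lam - a j))))
       = (\<Sum>j\<le>k. complex_of_real (E j) * (complex_of_real (1 / r ^ DIM('a)) *
             (CLINT x|lebesgue. cis (lam \<bullet> x) * complex_of_real (f j r x))))"
    proof (rule sum.cong[OF refl])
      fix j assume "j \<in> {..k}"
      then have "j \<le> k" by simp
      from fourier[OF this r, of lam]
      show "complex_of_real (E j) * complex_of_real (g j (r * (norm lam - a j))) =
         complex_of_real (E j) * (complex_of_real (1 / r ^ DIM('a)) *
             (CLINT x|lebesgue. cis (lam \<bullet> x) * complex_of_real (f j r x)))" by simp
    qed
    also have "\<dots> = complex_of_real (1 / r ^ DIM('a)) * (\<Sum>j\<le>k. complex_of_real (E j) * (CLINT x|lebesgue. cis (lam \<bullet> x) * complex_of_real (f j r x)))"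
      by (simp add: sum_distrib_left algebra_simps)
    also have "\<dots> = 0" using s0 by simp
    finally have "complex_of_real (\<Sum>j\<le>k. E j * g j (r * (norm lam - a j))) = 0"
      by simp
    then show ?thesis by (simp only: of_real_eq_0_iff)
  qed
  obtain e :: 'a where e: "e \<in> Basis" using nonempty_Basis by blast
  have ne: "norm e = 1" using e by simp
  have am: "a m \<ge> 0"
  proof (cases "m = 0")
    case True then show ?thesis using a0 by simp
  next
    case False then have "a 0 < a m" using a_mono[of 0 m] m by simp
    then show ?thesis using a0 by simp
  qed
  have ainj: "a m - a j \<noteq> 0" if "j \<le> k" "j \<noteq> m" for j
  proof (cases "j < m")
    case True then show ?thesis using a_mono[of j m] m by simp
  next
    case False then have "m < j" using that by simp
    then show ?thesis using a_mono[of m j] that by simp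
  qed
  have gm0: "g m t = 0" if t: "t \<ge> 0" for t
  proof -
    define S where "S r = (\<Sum>j\<in>{..k} - {m}. E j * g j (r * (a m - a j) + t))" for r
    have eq: "E m * g m t + S r = 0" if r: "r > 0" for r
    proof -
      define lam where "lam = (a m + t / r) *\<^sub>R e"
      have nl: "norm lam = a m + t / r" using am t r ne by (simp add: lam_def)
      have rr: "r * (norm lam - a j) = r * (a m - a j) + t" for j
        using r by (simp add: nl field_simps)
      have "(\<Sum>j\<le>k. E j * g j (r * (a m - a j) + t)) = 0" using gsum[OF r, of lam] by (simp add: rr)
      moreover have "(\<Sum>j\<le>k. E j * g j (r * (a m - a j) + t)) = E m * g j' t + S r" if "j' = m" for j'
        using that m by (simp add: S_def sum.remove[of "{..k}" m])
      ultimately show ?thesis by simp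
    qed
    have Slim: "(S \<longlongrightarrow> 0) at_top"
    proof -
      have "((\<lambda>r. \<Sum>j\<in>{..k} - {m}. E j * g j (r * (a m - a j) + t)) \<longlongrightarrow> (\<Sum>j\<in>{..k} - {m}. E j * 0)) at_top"
      proof (intro tendsto_sum tendsto_mult tendsto_const)
        fix j assume j: "j \<in> {..k} - {m}"
        then have jk: "j \<le> k" "j \<noteq> m" by auto
        obtain s0 c where sc: "s0 \<ge> 0" "c > 0" "\<forall>s. s \<ge> s0 \<and> s > 0 \<longrightarrow> (g j s)\<^sup>2 \<le> c / s ^ DIM('a)"
          using g_decay[OF jk(1)] by blast
        show "((\<lambda>r. g j (r * (a m - a j) + t)) \<longlongrightarrow> 0) at_top"
          by (rule decay_lim[OF g_even[OF jk(1)] sc]) (use ainj[OF jk] DIM_positive in auto)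
      qed
      then show ?thesis by (simp add: S_def[abs_def])
    qed
    have "((\<lambda>r. - S r) \<longlongrightarrow> 0) at_top" using tendsto_minus[OF Slim] by simp
    moreover have "eventually (\<lambda>r. - S r = E m * g m t) at_top"
      using eventually_gt_at_top[of "0::real"] proof eventually_elim
      case (elim r)
      from eq[OF elim] show ?case by linarith
    qed
    ultimately have "((\<lambda>r. E m * g m t) \<longlongrightarrow> 0) (at_top :: real filter)"
      by (rule Lim_transform_eventually)
    then have "E m * g m t = 0" by (simp add: tendsto_const_iff)
    then show ?thesis using Em by simp
  qed
  have gz: "g m s = 0" for s
  proof (cases "s \<ge> 0")
    case True then show ?thesis by (rule gm0)
  next
    case False
    then have "g m (- s) = 0" by (intro gm0) simp
    then show ?thesis using g_even[OF m(1)] by simp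
  qed
  have FTz: "(LINT x|lebesgue. cis (lam \<bullet> x) * complex_of_real (f m 1 x)) = 0" for lam :: 'a
    using fourier[OF m(1), of 1 lam] gz by simp
  have "AE x in lebesgue. f m 1 x = 0"
    by (rule fourier_unique[OF L1[OF m(1)] FTz]) simp
  moreover have meas: "{x. f m 1 x \<noteq> 0} \<in> sets lebesgue"
  proof -
    have "f m 1 \<in> borel_measurable lebesgue" using L1[OF m(1)] by (simp add: borel_measurable_integrable)
    then have "{x \<in> space lebesgue. f m 1 x \<noteq> 0} \<in> sets lebesgue" by measurable
    then show ?thesis by simp
  qed
  ultimately have "emeasure lebesgue {x. f m 1 x \<noteq> 0} = 0"
    by (subst (asm) AE_iff_measurable[OF meas]) auto
  moreover have "emeasure lebesgue {x. f m 1 x \<noteq> 0} > 0"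
    using nz[OF m(1), of 1] by (simp add: ess_nonzero_def)
  ultimately show False by simp
qed

end
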